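(* There is an absolute constant $c>0$ such that for all $\varepsilon\in(0,\tfrac18)$, $\mathsf C_{\rm rand}(\varepsilon;\mathsf O^{1^{\rm st}})\ge c/\varepsilon$.
   Context: A function $f:\mathbb R^d\to\mathbb R$ is $\beta$-smooth if it is continuously differentiable and $\nabla f$ is $\beta$-Lipschitz. A point $x$ is an $\varepsilon$-stationary point of $f$ if $\|\nabla f(x)\|<\varepsilon$. Let $\mathcal F(\beta,\Delta,d)$ be the class of $\beta$-smooth $f:\mathbb R^d\to\mathbb R$ with $f(0)-\inf f\le\Delta$. The oracle $\mathsf O^{1^{\rm st}}$ returns $\nabla f(x)$ on query $x$; the oracle $\mathsf O^{0^{\rm th}+1^{\rm st}}$ returns $(f(x),\nabla f(x))$. A deterministic algorithm chooses queries $x_1,x_2,\dots\in\mathbb R^d$ where each $x_{i}$ is a (measurable) function of $x_1,\dots,x_{i-1}$ and the oracle responses at them; a randomized algorithm is the same except that each $x_i$ may also depend on a random seed $U$ independent of $f$. $\mathsf C_{\det}(\varepsilon;\beta,\Delta,d,\mathsf O)$ is the least $N$ such that some deterministic algorithm using $\mathsf O$ has, for every $f\in\mathcal F(\beta,\Delta,d)$, an $\varepsilon$-stationary point of $f$ among $x_1,\dots,x_N$; $\mathsf C_{\rm rand}(\varepsilon;\beta,\Delta,d,\mathsf O)$ is the least $N$ such that some randomized algorithm using $\mathsf O$ has, for every $f\in\mathcal F(\beta,\Delta,d)$, with probability at least $1/2$ an $\varepsilon$-stationary point of $f$ among $x_1,\dots,x_N$. Abbreviate $\mathsf C_*(\varepsilon;\mathsf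 O)=\mathsf C_*(\varepsilon;1,1,1,\mathsf O)$ (one-dimensional, $1$-smooth, objective gap at most $1$). *)

theory Defs
  imports "HOL-Probability.Probability"
begin

text \<open>One-dimensional setting (d = 1): the gradient of f at x is deriv f x.\<close>

definition smooth1 :: "real \<Rightarrow> (real \<Rightarrow> real) \<Rightarrow> bool" where
  "smooth1 \<beta> f \<longleftrightarrow> (\<forall>x. f differentiable (at x)) \<and>
     (\<forall>x y. \<bar>deriv f x - deriv f y\<bar> \<le> \<beta> * \<bar>x - y\<bar>)"

definition Fclass :: "real \<Rightarrow> real \<Rightarrow> (real \<Rightarrow> real) set" where
  "Fclass \<beta> \<Delta> = {f. smooth1 \<beta> f \<and> bdd_below (range f) \<and> f 0 - Inf (range f) \<le> \<Delta>}"

text \<open>A randomized first-order algorithm with seed space M: the i-th query (0-based)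
  is alg i u g, where u is the seed and g (restricted to {..<i}) the vector of
  oracle responses at the previous queries.\<close>

definition rand_alg :: "'u measure \<Rightarrow> (nat \<Rightarrow> 'u \<Rightarrow> (nat \<Rightarrow> real) \<Rightarrow> real) \<Rightarrow> bool" where
  "rand_alg M alg \<longleftrightarrow> prob_space M \<and>
     (\<forall>i. (\<lambda>(u, g). alg i u g) \<in> M \<Otimes>\<^sub>M PiM {..<i} (\<lambda>_. borel) \<rightarrow>\<^sub>M borel)"

fun queries :: "(nat \<Rightarrow> 'u \<Rightarrow> (nat \<Rightarrow> real) \<Rightarrow> real) \<Rightarrow> (real \<Rightarrow> real) \<Rightarrow> 'u \<Rightarrow> nat \<Rightarrow> real list" where
  "queries alg f u 0 = []"
| "queries alg f u (Suc n) =
     (let xs = queries alg f u n in xs @ [alg n u (\<lambda>j\<in>{..<n}. deriv f (xs ! j))])"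

text \<open>Randomized complexity C_rand(eps; beta, Delta, 1, O^1st), with the random seed
  drawn from an arbitrary probability distribution on the reals (Borel sets);
  infinity if no N works.\<close>
definition C_rand :: "real \<Rightarrow> real \<Rightarrow> real \<Rightarrow> enat" where
  "C_rand \<epsilon> \<beta> \<Delta> = Inf (enat ` {N. \<exists>(M :: real measure) alg.
      sets M = sets borel \<and> rand_alg M alg \<and>
      (\<forall>f\<in>Fclass \<beta> \<Delta>.
         measure M {u \<in> space M. \<exists>i<N. \<bar>deriv f (queries alg f u N ! i)\<bar> < \<epsilon>} \<ge> 1/2)})"

end

theory Submission
  imports Defs
begin


definition hC :: "real \<Rightarrow> real \<Rightarrow> real set" where
  "hC \<phi> L = (\<lambda>k::nat. \<phi> + L/2 + real k * L) ` UNIV"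

definition hh :: "real \<Rightarrow> real \<Rightarrow> real \<Rightarrow> real" where
  "hh \<phi> L x = max 0 (1/2 - infdist x (hC \<phi> L))"

definition pp :: "real \<Rightarrow> real \<Rightarrow> real \<Rightarrow> real \<Rightarrow> real \<Rightarrow> real" where
  "pp g \<phi> L R x = max (-g + hh \<phi> L x) (min g (-g + (x - R)))"

definition ff :: "real \<Rightarrow> real \<Rightarrow> real \<Rightarrow> real \<Rightarrow> real \<Rightarrow> real" where
  "ff g \<phi> L R x = integral {0..x} (pp g \<phi> L R) - integral {x..0} (pp g \<phi> L R)"

lemma hh_lip: "\<bar>hh \<phi> L x - hh \<phi> L y\<bar> \<le> \<bar>x - y\<bar>"
  using infdist_triangle_abs[of x "hC \<phi> L" y] unfolding hh_def dist_real_def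
  by linarith

lemma pp_lip: "\<bar>pp g \<phi> L R x - pp g \<phi> L R y\<bar> \<le> \<bar>x - y\<bar>"
  using hh_lip[of \<phi> L x y] unfolding pp_def by linarith

lemma pp_cont: "continuous_on UNIV (pp g \<phi> L R)"
  unfolding pp_def hh_def by (intro continuous_intros)

lemma ff_deriv: "(ff g \<phi> L R has_real_derivative pp g \<phi> L R x) (at x)"
proof -
  let ?p = "pp g \<phi> L R"
  define a where "a = min 0 x - 1"
  define b where "b = max 0 x + 1"
  have cont: "continuous_on {a..b} ?p" using pp_cont continuous_on_subset by blast
  have int: "?p integrable_on {a..b}" using cont integrable_continuous_real by blast
  have d1: "((\<lambda>u. integral {a..u} ?p) has_real_derivative ?p x) (at x within {a..b})"
  proof -
    have "x \<in> {a..b}" unfolding a_def b_def by auto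
    then show ?thesis using integral_has_real_derivative[OF cont] by blast
  qed
  have "interior {a..b} = {a<..<b}" by simp
  then have "x \<in> interior {a..b}" unfolding a_def b_def by auto
  then have d2: "((\<lambda>u. integral {a..u} ?p) has_real_derivative ?p x) (at x)"
    using d1 at_within_interior by metis
  then have d3: "((\<lambda>u. integral {a..u} ?p - integral {a..0} ?p) has_real_derivative ?p x) (at x)"
    by (auto intro!: derivative_eq_intros)
  show ?thesis
  proof (rule has_field_derivative_transform_within_open[OF d3, of "{a<..<b}"])
    show "open {a<..<b}" by simp
    show "x \<in> {a<..<b}" unfolding a_def b_def by auto
    fix u assume u: "u \<in> {a<..<b}"
    show "integral {a..u} ?p - integral {a..0} ?p = ff g \<phi> L R u"
    proof (cases "0 \<le> u")
      case True
      have i1: "?p integrable_on {a..u}"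
        by (rule integrable_subinterval_real[OF int]) (use u in auto)
      have "integral {a..0} ?p + integral {0..u} ?p = integral {a..u} ?p"
        using Henstock_Kurzweil_Integration.integral_combine[where a=a and c=0 and b=u and f="?p"] True u a_def i1
        by (smt (verit) min.cobounded1)
      moreover have "integral {u..0} ?p = 0"
        using True by (cases "u = 0") auto
      ultimately show ?thesis unfolding ff_def by simp
    next
      case False
      have i1: "?p integrable_on {a..0}"
        by (rule integrable_subinterval_real[OF int]) (use u a_def b_def in auto)
      have "integral {a..u} ?p + integral {u..0} ?p = integral {a..0} ?p"
        using Henstock_Kurzweil_Integration.integral_combine[where a=a and c=u and b=0 and f="?p"] False u a_def i1
        by (smt (verit) greaterThanLessThan_iff)
      moreover have "integral {0..u} ?p = 0"
        using False by auto
      ultimately show ?thesis unfolding ff_def by simp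
    qed
  qed
qed

lemma infdist_geI: "A \<noteq> {} \<Longrightarrow> (\<And>a. a \<in> A \<Longrightarrow> d \<le> dist x a) \<Longrightarrow> d \<le> infdist x A"
  unfolding infdist_notempty by (rule cINF_greatest) auto

lemma hC_ne: "hC \<phi> L \<noteq> {}" unfolding hC_def by auto

lemma hh_ge0: "0 \<le> hh \<phi> L x" unfolding hh_def by simp

lemma hh_zero: assumes "\<And>k::nat. 1/2 \<le> \<bar>x - (\<phi> + L/2 + real k * L)\<bar>"
  shows "hh \<phi> L x = 0"
proof -
  have "1/2 \<le> infdist x (hC \<phi> L)"
  proof (rule infdist_geI[OF hC_ne])
    fix a assume "a \<in> hC \<phi> L"
    then obtain k where "a = \<phi> + L/2 + real k * L" unfolding hC_def by auto
    then show "1/2 \<le> dist x a" using assms[of k] by (simp add: dist_real_def)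
  qed
  then show ?thesis unfolding hh_def by simp
qed

lemma hh_nz: assumes "hh \<phi> L x \<noteq> 0"
  shows "\<exists>k::nat. \<bar>x - (\<phi> + L/2 + real k * L)\<bar> < 1/2"
  using hh_zero assms by (meson not_le)

lemma hh_center: assumes "\<bar>x - (\<phi> + L/2 + real k * L)\<bar> \<le> 1/4"
  shows "1/4 \<le> hh \<phi> L x"
proof -
  have "infdist x (hC \<phi> L) \<le> 1/4"
  proof (rule infdist_le2[where a="\<phi> + L/2 + real k * L"])
    show "\<phi> + L/2 + real k * L \<in> hC \<phi> L" unfolding hC_def by auto
    show "dist x (\<phi> + L/2 + real k * L) \<le> 1/4" using assms by (simp add: dist_real_def)
  qed
  then show ?thesis unfolding hh_def by simp
qed

lemma pp_ge: "-g + hh \<phi> L x \<le> pp g \<phi> L R x" unfolding pp_def by simp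

lemma pp_off: assumes "0 < g" "hh \<phi> L x = 0" "\<not> (R < x \<and> x < R + 2*g)"
  shows "pp g \<phi> L R x = (if x \<le> R then -g else g)"
  using assms unfolding pp_def by (auto simp: max_def min_def)

lemma hh_neg: assumes "x < 0" "0 \<le> \<phi>" "1 \<le> L" shows "hh \<phi> L x = 0"
proof (rule hh_zero)
  fix k :: nat
  have "0 \<le> real k * L" using assms by simp
  then show "1/2 \<le> \<bar>x - (\<phi> + L/2 + real k * L)\<bar>" using assms by linarith
qed

lemma pp_neg: assumes "0 < g" "x < 0" "0 \<le> \<phi>" "1 \<le> L" "0 \<le> R"
  shows "pp g \<phi> L R x = -g"
  using pp_off[OF assms(1) hh_neg[OF assms(2,3,4)], of R] assms by auto

lemma ff_lb: assumes "a \<le> b" "\<And>t. a \<le> t \<Longrightarrow> t \<le> b \<Longrightarrow> m \<le> pp g \<phi> L R t"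
  shows "m * (b - a) \<le> ff g \<phi> L R b - ff g \<phi> L R a"
proof (cases "a = b")
  case True then show ?thesis by simp
next
  case False
  then have "a < b" using assms by simp
  from MVT2[OF this, of "ff g \<phi> L R" "pp g \<phi> L R"] ff_deriv
  obtain z where z: "a < z" "z < b" "ff g \<phi> L R b - ff g \<phi> L R a = (b - a) * pp g \<phi> L R z"
    by blast
  have "m \<le> pp g \<phi> L R z" using assms z by simp
  then show ?thesis using z \<open>a < b\<close> by (simp add: mult.commute mult_right_mono)
qed

lemma ff_period: assumes "g * L = 1/8" "1 \<le> L" "0 < g"
  shows "ff g \<phi> L R (\<phi> + real k * L) \<le> ff g \<phi> L R (\<phi> + real (Suc k) * L)"
proof -
  let ?f = "ff g \<phi> L R"
  define c where "c = \<phi> + L/2 + real k * L"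
  have e: "\<phi> + real (Suc k) * L = \<phi> + real k * L + L" by (simp add: algebra_simps)
  have p_ge: "-g \<le> pp g \<phi> L R t" for t using pp_ge[of g \<phi> L t R] hh_ge0[of \<phi> L t] by linarith
  have 1: "(-g) * ((c - 1/4) - (\<phi> + real k * L)) \<le> ?f (c - 1/4) - ?f (\<phi> + real k * L)"
    by (rule ff_lb) (use assms c_def p_ge in auto)
  have 2: "(1/4 - g) * ((c + 1/4) - (c - 1/4)) \<le> ?f (c + 1/4) - ?f (c - 1/4)"
  proof (rule ff_lb)
    fix t assume "c - 1/4 \<le> t" "t \<le> c + 1/4"
    then have "\<bar>t - (\<phi> + L/2 + real k * L)\<bar> \<le> 1/4" unfolding abs_le_iff using c_def by linarith
    then have "1/4 \<le> hh \<phi> L t" by (rule hh_center)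
    then show "1/4 - g \<le> pp g \<phi> L R t" using pp_ge[of g \<phi> L t R] by linarith
  qed simp
  have 3: "(-g) * ((\<phi> + real k * L + L) - (c + 1/4)) \<le> ?f (\<phi> + real k * L + L) - ?f (c + 1/4)"
    by (rule ff_lb) (use assms c_def p_ge in auto)
  have "(-g) * ((c - 1/4) - (\<phi> + real k * L)) + (1/4 - g) * ((c + 1/4) - (c - 1/4))
      + (-g) * ((\<phi> + real k * L + L) - (c + 1/4)) = 1/8 - g * L"
    unfolding c_def by (simp add: algebra_simps)
  then have "?f (\<phi> + real k * L) \<le> ?f (\<phi> + real k * L + L)"
    using 1 2 3 assms(1) by (smt (verit))
  then show ?thesis using e by (simp only:)
qed

lemma ff_periods: assumes "g * L = 1/8" "1 \<le> L" "0 < g"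
  shows "ff g \<phi> L R \<phi> \<le> ff g \<phi> L R (\<phi> + real k * L)"
proof (induction k)
  case 0 then show ?case by simp
next
  case (Suc k) then show ?case using ff_period[OF assms, of \<phi> R k] by linarith
qed

lemma ff_lower: assumes "g * L = 1/8" "1 \<le> L" "0 < g" "0 \<le> \<phi>" "\<phi> \<le> L" "0 \<le> R"
  shows "ff g \<phi> L R 0 - 1/2 \<le> ff g \<phi> L R y"
proof -
  let ?f = "ff g \<phi> L R"
  have p_ge: "-g \<le> pp g \<phi> L R t" for t using pp_ge[of g \<phi> L t R] hh_ge0[of \<phi> L t] by linarith
  have gL: "g * \<phi> \<le> 1/8" using assms mult_left_mono[of \<phi> L g] by linarith
  show ?thesis
  proof (cases "y < 0")
    case True
    from MVT2[OF True, of ?f "pp g \<phi> L R"] ff_deriv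
    obtain z where z: "y < z" "z < 0" "?f 0 - ?f y = (0 - y) * pp g \<phi> L R z" by blast
    have "pp g \<phi> L R z = -g" using pp_neg[of g z \<phi> L R] z assms by simp
    moreover have "y * g \<le> 0" using True assms by (simp add: mult_nonpos_nonneg)
    ultimately show ?thesis using z by simp
  next
    case False
    show ?thesis
    proof (cases "y < \<phi>")
      case True
      have "(-g) * (y - 0) \<le> ?f y - ?f 0" by (rule ff_lb) (use False p_ge in auto)
      moreover have "g * y \<le> g * \<phi>" using True assms by simp
      ultimately show ?thesis using gL by (simp add: algebra_simps)
    next
      case False2: False
      define k where "k = nat \<lfloor>(y - \<phi>) / L\<rfloor>"
      have L0: "0 < L" using assms by simp
      have fl: "real k = of_int \<lfloor>(y - \<phi>) / L\<rfloor>" unfolding k_def using False2 L0 by simp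
      have "real k \<le> (y - \<phi>) / L" "(y - \<phi>) / L < real k + 1"
        using fl by linarith+
      then have k1: "real k * L \<le> y - \<phi>" and k2: "y - \<phi> < real k * L + L"
        using L0 by (simp_all add: field_simps)
      have "(-g) * (y - (\<phi> + real k * L)) \<le> ?f y - ?f (\<phi> + real k * L)"
        by (rule ff_lb) (use k1 p_ge in auto)
      moreover have "g * (y - (\<phi> + real k * L)) \<le> g * L" using k2 assms by simp
      moreover have "(-g) * (\<phi> - 0) \<le> ?f \<phi> - ?f 0" by (rule ff_lb) (use assms p_ge in auto)
      moreover note ff_periods[OF assms(1-3), of \<phi> R k]
      ultimately show ?thesis using gL assms by (simp add: algebra_simps)
    qed
  qed
qed



fun qr :: "(nat \<Rightarrow> 'u \<Rightarrow> (nat \<Rightarrow> real) \<Rightarrow> real) \<Rightarrow> (real \<Rightarrow> real) \<Rightarrow> 'u \<Rightarrow> nat \<Rightarrow> real list" where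
  "qr alg r u 0 = []"
| "qr alg r u (Suc n) =
     (let xs = qr alg r u n in xs @ [alg n u (\<lambda>j\<in>{..<n}. r (xs ! j))])"

lemma queries_qr: "queries alg f u n = qr alg (deriv f) u n"
  by (induction n) (simp_all add: Let_def)

lemma length_qr[simp]: "length (qr alg r u n) = n"
  by (induction n) (simp_all add: Let_def)

lemma qr_Suc: "qr alg r u (Suc n) = qr alg r u n @ [alg n u (\<lambda>j\<in>{..<n}. r (qr alg r u n ! j))]"
  by (simp add: Let_def)

declare qr.simps(2)[simp del]

lemma take_qr: "m \<le> n \<Longrightarrow> take m (qr alg r u n) = qr alg r u m"
proof (induction n)
  case 0 then show ?case by simp
next
  case (Suc n)
  show ?case
  proof (cases "m \<le> n")
    case True
    then show ?thesis using Suc by (simp add: qr_Suc)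
  next
    case False
    then have "m = Suc n" using Suc by simp
    then show ?thesis by simp
  qed
qed

lemma qr_nth: "i < n \<Longrightarrow> qr alg r u n ! i = qr alg r u (Suc i) ! i"
proof -
  assume "i < n"
  then have "take (Suc i) (qr alg r u n) = qr alg r u (Suc i)" by (intro take_qr) simp
  then have "take (Suc i) (qr alg r u n) ! i = qr alg r u (Suc i) ! i" by simp
  then show ?thesis by simp
qed

lemma qr_agree: "(\<forall>x\<in>set (qr alg r1 u n). r1 x = r2 x) \<Longrightarrow> qr alg r2 u n = qr alg r1 u n"
proof (induction n)
  case 0 then show ?case by simp
next
  case (Suc n)
  have sub: "set (qr alg r1 u n) \<subseteq> set (qr alg r1 u (Suc n))" by (auto simp: qr_Suc)
  then have IH: "qr alg r2 u n = qr alg r1 u n" using Suc by blast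
  have "(\<lambda>j\<in>{..<n}. r2 (qr alg r1 u n ! j)) = (\<lambda>j\<in>{..<n}. r1 (qr alg r1 u n ! j))"
  proof (rule restrict_ext)
    fix j assume "j \<in> {..<n}"
    then have "qr alg r1 u n ! j \<in> set (qr alg r1 u (Suc n))" using sub by auto
    then show "r2 (qr alg r1 u n ! j) = r1 (qr alg r1 u n ! j)" using Suc.prems by auto
  qed
  then show ?case using IH by (simp add: qr_Suc)
qed

lemma qr_map: "map r1 (qr alg r1 u n) = map r2 (qr alg r2 u n) \<Longrightarrow> qr alg r1 u n = qr alg r2 u n"
proof (induction n)
  case 0 then show ?case by simp
next
  case (Suc n)
  let ?x1 = "alg n u (\<lambda>j\<in>{..<n}. r1 (qr alg r1 u n ! j))"
  let ?x2 = "alg n u (\<lambda>j\<in>{..<n}. r2 (qr alg r2 u n ! j))"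
  have "map r1 (qr alg r1 u n) @ [r1 ?x1] = map r2 (qr alg r2 u n) @ [r2 ?x2]"
    using Suc.prems by (simp add: qr_Suc)
  then have m: "map r1 (qr alg r1 u n) = map r2 (qr alg r2 u n)" by simp
  then have e: "qr alg r1 u n = qr alg r2 u n" using Suc.IH by simp
  have "(\<lambda>j\<in>{..<n}. r1 (qr alg r1 u n ! j)) = (\<lambda>j\<in>{..<n}. r2 (qr alg r2 u n ! j))"
  proof (rule restrict_ext)
    fix j assume "j \<in> {..<n}"
    then have "map r1 (qr alg r1 u n) ! j = map r2 (qr alg r2 u n) ! j" using m by simp
    then show "r1 (qr alg r1 u n ! j) = r2 (qr alg r2 u n ! j)" using \<open>j \<in> {..<n}\<close> by simp
  qed
  then show ?case using e by (simp add: qr_Suc)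
qed

lemma qr_map_Suc: assumes m: "map r1 (qr alg r1 u n) = map r2 (qr alg r2 u n)"
  shows "qr alg r1 u (Suc n) = qr alg r2 u (Suc n)"
proof -
  have e: "qr alg r1 u n = qr alg r2 u n" using qr_map[OF m] .
  have "(\<lambda>j\<in>{..<n}. r1 (qr alg r1 u n ! j)) = (\<lambda>j\<in>{..<n}. r2 (qr alg r2 u n ! j))"
  proof (rule restrict_ext)
    fix j assume "j \<in> {..<n}"
    then have "map r1 (qr alg r1 u n) ! j = map r2 (qr alg r2 u n) ! j" using m by simp
    then show "r1 (qr alg r1 u n ! j) = r2 (qr alg r2 u n ! j)" using \<open>j \<in> {..<n}\<close> by simp
  qed
  then show ?thesis using e by (simp add: qr_Suc)
qed

definition Ir :: "real \<Rightarrow> real \<Rightarrow> real \<Rightarrow> real" where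
  "Ir g R x = (if x \<le> R then -g else g)"

lemma sum_pow2_le: "(\<Sum>i<N. (2::nat)^i) \<le> 2^N"
  by (induction N) auto

lemma valley_count:
  assumes "0 < g" "2 * g < 1"
  shows "card {j\<in>{..<J}. \<exists>i<N. real j < qr alg (Ir g (real j)) u N ! i \<and>
             qr alg (Ir g (real j)) u N ! i < real j + 2*g} \<le> 2^N"
proof -
  let ?x = "\<lambda>i j. qr alg (Ir g (real j)) u (Suc i) ! i"
  define V where "V i = {j\<in>{..<J}. real j < ?x i j \<and> ?x i j < real j + 2*g}" for i
  have sub: "{j\<in>{..<J}. \<exists>i<N. real j < qr alg (Ir g (real j)) u N ! i \<and>
             qr alg (Ir g (real j)) u N ! i < real j + 2*g} \<subseteq> (\<Union>i<N. V i)"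
  proof
    fix j assume "j \<in> {j\<in>{..<J}. \<exists>i<N. real j < qr alg (Ir g (real j)) u N ! i \<and>
             qr alg (Ir g (real j)) u N ! i < real j + 2*g}"
    then obtain i where "j < J" "i < N" "real j < qr alg (Ir g (real j)) u N ! i"
      "qr alg (Ir g (real j)) u N ! i < real j + 2*g" by auto
    moreover have "qr alg (Ir g (real j)) u N ! i = ?x i j" by (rule qr_nth) (rule \<open>i < N\<close>)
    ultimately show "j \<in> (\<Union>i<N. V i)" unfolding V_def by auto
  qed
  have cV: "card (V i) \<le> 2^i" for i
  proof -
    let ?m = "\<lambda>j. map (Ir g (real j)) (qr alg (Ir g (real j)) u i)"
    let ?T = "{xs. set xs \<subseteq> {-g, g} \<and> length xs = i}"
    have inj: "inj_on ?m (V i)"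
    proof (rule inj_onI)
      fix j1 j2 assume j1: "j1 \<in> V i" and j2: "j2 \<in> V i" and eq: "?m j1 = ?m j2"
      have "qr alg (Ir g (real j1)) u (Suc i) = qr alg (Ir g (real j2)) u (Suc i)" using qr_map_Suc[OF eq] .
      then have "?x i j1 = ?x i j2" by simp
      then have "real j1 < real j2 + 2*g" "real j2 < real j1 + 2*g" using j1 j2 unfolding V_def by auto
      then have "real j1 < real j2 + 1" "real j2 < real j1 + 1" using assms by linarith+
      then show "j1 = j2" by linarith
    qed
    have "?m ` V i \<subseteq> ?T" by (auto simp: Ir_def)
    moreover have "finite ?T" by (rule finite_lists_length_eq) simp
    ultimately have "card (?m ` V i) \<le> card ?T" by (rule card_mono[rotated])
    moreover have "card ?T = 2^i"
      using card_lists_length_eq[of "{-g,g}" i] assms by (simp add: numeral_2_eq_2)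
    ultimately show ?thesis using card_image[OF inj] by simp
  qed
  have fin: "finite (V i)" for i unfolding V_def by simp
  have "card (\<Union>i<N. V i) \<le> (\<Sum>i<N. card (V i))" by (rule card_UN_le) simp
  also have "\<dots> \<le> (\<Sum>i<N. 2^i)" by (rule sum_mono) (rule cV)
  also have "\<dots> \<le> 2^N" by (rule sum_pow2_le)
  finally show ?thesis
    using card_mono[OF finite_UN_I[OF finite_lessThan fin] sub] by linarith
qed

lemma hill_count1:
  fixes x :: real and L :: nat
  assumes "1 \<le> L"
  shows "card {\<phi>\<in>{..<L}. \<exists>k::nat. \<bar>x - (real \<phi> + real L/2 + real k * real L)\<bar> < 1/2} \<le> 1"
proof -
  have "\<phi>1 = \<phi>2" if "\<phi>1 < L" "\<phi>2 < L" "\<bar>x - (real \<phi>1 + real L/2 + real k1 * real L)\<bar> < 1/2"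
    "\<bar>x - (real \<phi>2 + real L/2 + real k2 * real L)\<bar> < 1/2" for \<phi>1 \<phi>2 k1 k2
  proof -
    have "\<bar>real (\<phi>1 + k1 * L) - real (\<phi>2 + k2 * L)\<bar> < 1"
      using that(3,4) unfolding of_nat_add of_nat_mult by linarith
    then have "\<phi>1 + k1 * L = \<phi>2 + k2 * L" by linarith
    then have "(\<phi>1 + k1 * L) mod L = (\<phi>2 + k2 * L) mod L" by simp
    then show ?thesis using that by simp
  qed
  then have "\<forall>a1\<in>{\<phi>\<in>{..<L}. \<exists>k::nat. \<bar>x - (real \<phi> + real L/2 + real k * real L)\<bar> < 1/2}.
     \<forall>a2\<in>{\<phi>\<in>{..<L}. \<exists>k::nat. \<bar>x - (real \<phi> + real L/2 + real k * real L)\<bar> < 1/2}. a1 = a2"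
    by blast
  then show ?thesis using card_le_Suc0_iff_eq[of "{\<phi>\<in>{..<L}. \<exists>k::nat. \<bar>x - (real \<phi> + real L/2 + real k * real L)\<bar> < 1/2}"]
    by simp
qed



lemma ff_in_F: assumes "g * L = 1/8" "1 \<le> L" "0 < g" "0 \<le> \<phi>" "\<phi> \<le> L" "0 \<le> R"
  shows "ff g \<phi> L R \<in> Fclass 1 1"
proof -
  let ?f = "ff g \<phi> L R"
  have d: "deriv ?f x = pp g \<phi> L R x" for x using DERIV_imp_deriv[OF ff_deriv] .
  have sm: "smooth1 1 ?f"
  proof -
    have "?f differentiable (at x)" for x
      unfolding real_differentiable_def using ff_deriv[of g \<phi> L R x] by blast
    then show ?thesis unfolding smooth1_def d using pp_lip by auto
  qed
  have lb: "?f 0 - 1/2 \<le> ?f y" for y using ff_lower[OF assms] .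
  have bb: "bdd_below (range ?f)" using lb by (intro bdd_belowI2) 
  have "?f 0 - 1/2 \<le> Inf (range ?f)" using lb by (intro cInf_greatest) auto
  then show ?thesis unfolding Fclass_def using sm bb by simp
qed

lemma succ_zone:
  fixes \<phi>n Ln j :: nat
  assumes "0 < g" "\<epsilon> \<le> g"
    and S: "\<exists>i<N. \<bar>deriv (ff g (real \<phi>n) (real Ln) (real j))
                (queries alg (ff g (real \<phi>n) (real Ln) (real j)) u N ! i)\<bar> < \<epsilon>"
  shows "\<exists>i<N. (\<exists>k::nat. \<bar>qr alg (Ir g (real j)) u N ! i - (real \<phi>n + real Ln/2 + real k * real Ln)\<bar> < 1/2)
      \<or> (real j < qr alg (Ir g (real j)) u N ! i \<and> qr alg (Ir g (real j)) u N ! i < real j + 2*g)"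
proof (rule ccontr)
  let ?f = "ff g (real \<phi>n) (real Ln) (real j)"
  let ?Q = "qr alg (Ir g (real j)) u N"
  assume na: "\<not> ?thesis"
  have d: "deriv ?f x = pp g (real \<phi>n) (real Ln) (real j) x" for x using DERIV_imp_deriv[OF ff_deriv] .
  have agree: "deriv ?f x = Ir g (real j) x" if "x \<in> set ?Q" for x
  proof -
    obtain i where i: "i < N" "x = ?Q ! i" using \<open>x \<in> set ?Q\<close> by (auto simp: in_set_conv_nth)
    have "hh (real \<phi>n) (real Ln) x = 0"
    proof (rule ccontr)
      assume "hh (real \<phi>n) (real Ln) x \<noteq> 0"
      from hh_nz[OF this] obtain k :: nat where
        "\<bar>x - (real \<phi>n + real Ln / 2 + real k * real Ln)\<bar> < 1/2" by blast
      then show False using na i by blast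
    qed
    moreover have "\<not> (real j < x \<and> x < real j + 2*g)" using na i by blast
    ultimately show ?thesis using pp_off[OF assms(1)] d unfolding Ir_def by simp
  qed
  have "qr alg (deriv ?f) u N = ?Q" by (rule qr_agree) (use agree in auto)
  then have q: "queries alg ?f u N = ?Q" using queries_qr by metis
  from S obtain i where i: "i < N" "\<bar>deriv ?f (queries alg ?f u N ! i)\<bar> < \<epsilon>" by auto
  have "?Q ! i \<in> set ?Q" using i by simp
  then have "deriv ?f (?Q ! i) = Ir g (real j) (?Q ! i)" using agree by blast
  then have "\<bar>deriv ?f (?Q ! i)\<bar> = g" using assms unfolding Ir_def by auto
  then show False using i q assms by auto
qed

lemma count_u:
  fixes Ln J N :: nat
  assumes "1 \<le> Ln" "0 < g" "2 * g < 1" "\<epsilon> \<le> g"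
  shows "card {p\<in>{..<Ln} \<times> {..<J}. \<exists>i<N. \<bar>deriv (ff g (real (fst p)) (real Ln) (real (snd p)))
                (queries alg (ff g (real (fst p)) (real Ln) (real (snd p))) u N ! i)\<bar> < \<epsilon>}
         \<le> J * N + Ln * 2^N"
proof -
  let ?x = "\<lambda>j i. qr alg (Ir g (real j)) u N ! i"
  define H where "H j = {\<phi>\<in>{..<Ln}. \<exists>i<N. \<exists>k::nat. \<bar>?x j i - (real \<phi> + real Ln/2 + real k * real Ln)\<bar> < 1/2}" for j
  define V where "V = {j\<in>{..<J}. \<exists>i<N. real j < ?x j i \<and> ?x j i < real j + 2*g}"
  have sub: "{p\<in>{..<Ln} \<times> {..<J}. \<exists>i<N. \<bar>deriv (ff g (real (fst p)) (real Ln) (real (snd p)))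
                (queries alg (ff g (real (fst p)) (real Ln) (real (snd p))) u N ! i)\<bar> < \<epsilon>}
     \<subseteq> (\<Union>j<J. (\<lambda>\<phi>. (\<phi>, j)) ` H j) \<union> ({..<Ln} \<times> V)"
  proof
    fix p assume "p \<in> {p\<in>{..<Ln} \<times> {..<J}. \<exists>i<N. \<bar>deriv (ff g (real (fst p)) (real Ln) (real (snd p)))
                (queries alg (ff g (real (fst p)) (real Ln) (real (snd p))) u N ! i)\<bar> < \<epsilon>}"
    then obtain \<phi> j where p: "p = (\<phi>, j)" "\<phi> < Ln" "j < J"
      and S: "\<exists>i<N. \<bar>deriv (ff g (real \<phi>) (real Ln) (real j))
                (queries alg (ff g (real \<phi>) (real Ln) (real j)) u N ! i)\<bar> < \<epsilon>"
      by (cases p) simp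
    from succ_zone[OF assms(2,4) S] obtain i where i: "i < N"
      "(\<exists>k::nat. \<bar>?x j i - (real \<phi> + real Ln/2 + real k * real Ln)\<bar> < 1/2)
      \<or> (real j < ?x j i \<and> ?x j i < real j + 2*g)" by blast
    from i(2) show "p \<in> (\<Union>j<J. (\<lambda>\<phi>. (\<phi>, j)) ` H j) \<union> ({..<Ln} \<times> V)"
    proof
      assume "\<exists>k::nat. \<bar>?x j i - (real \<phi> + real Ln/2 + real k * real Ln)\<bar> < 1/2"
      then have "\<phi> \<in> H j" unfolding H_def using i p by auto
      then show ?thesis using p by auto
    next
      assume "real j < ?x j i \<and> ?x j i < real j + 2*g"
      then have "j \<in> V" unfolding V_def using i p by auto
      then show ?thesis using p by auto
    qed
  qed
  have cH: "card (H j) \<le> N" for j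
  proof -
    have "H j \<subseteq> (\<Union>i<N. {\<phi>\<in>{..<Ln}. \<exists>k::nat. \<bar>?x j i - (real \<phi> + real Ln/2 + real k * real Ln)\<bar> < 1/2})"
      unfolding H_def by auto
    then have "card (H j) \<le> card (\<Union>i<N. {\<phi>\<in>{..<Ln}. \<exists>k::nat. \<bar>?x j i - (real \<phi> + real Ln/2 + real k * real Ln)\<bar> < 1/2})"
      by (intro card_mono) auto
    also have "\<dots> \<le> (\<Sum>i<N. card {\<phi>\<in>{..<Ln}. \<exists>k::nat. \<bar>?x j i - (real \<phi> + real Ln/2 + real k * real Ln)\<bar> < 1/2})"
      by (rule card_UN_le) simp
    also have "\<dots> \<le> (\<Sum>i<N. 1)" by (rule sum_mono) (rule hill_count1[OF assms(1)])
    finally show ?thesis by simp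
  qed
  have c1: "card (\<Union>j<J. (\<lambda>\<phi>. (\<phi>, j)) ` H j) \<le> J * N"
  proof -
    have "card (\<Union>j<J. (\<lambda>\<phi>. (\<phi>, j)) ` H j) \<le> (\<Sum>j<J. card ((\<lambda>\<phi>. (\<phi>, j)) ` H j))"
      by (rule card_UN_le) simp
    also have "\<dots> \<le> (\<Sum>j<J. N)"
    proof (rule sum_mono)
      fix j assume "j \<in> {..<J}"
      have "finite (H j)" unfolding H_def by simp
      then show "card ((\<lambda>\<phi>. (\<phi>, j)) ` H j) \<le> N" using card_image_le[of "H j" "\<lambda>\<phi>. (\<phi>, j)"] cH[of j] by linarith
    qed
    finally show ?thesis by simp
  qed
  have c2: "card ({..<Ln} \<times> V) \<le> Ln * 2^N"
  proof -
    have "card V \<le> 2^N" unfolding V_def using valley_count[OF assms(2,3)] by simp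
    then show ?thesis by (simp add: card_cartesian_product)
  qed
  have fH: "finite (H j)" for j unfolding H_def by simp
  have fV: "finite V" unfolding V_def by simp
  have fin: "finite ((\<Union>j<J. (\<lambda>\<phi>. (\<phi>, j)) ` H j) \<union> ({..<Ln} \<times> V))"
    using fH fV by simp
  have "card ((\<Union>j<J. (\<lambda>\<phi>. (\<phi>, j)) ` H j) \<union> ({..<Ln} \<times> V)) \<le> J * N + Ln * 2^N"
    using card_Un_le[of "\<Union>j<J. (\<lambda>\<phi>. (\<phi>, j)) ` H j" "{..<Ln} \<times> V"] c1 c2 by linarith
  then show ?thesis using card_mono[OF fin sub] by linarith
qed



lemma key:
  fixes M :: "'u measure"
  assumes eps: "0 < \<epsilon>" "\<epsilon> < 1/256" and P: "prob_space M"
    and H: "\<forall>f\<in>Fclass 1 1. measure M {u \<in> space M. \<exists>i<N. \<bar>deriv f (queries alg f u N ! i)\<bar> < \<epsilon>} \<ge> 1/2"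
  shows "1 / (256 * \<epsilon>) \<le> real N"
proof (rule ccontr)
  assume "\<not> ?thesis"
  then have Nlt: "real N < 1 / (256 * \<epsilon>)" by simp
  interpret prob_space M by (rule P)
  define Ln where "Ln = nat \<lfloor>1 / (8 * \<epsilon>)\<rfloor>"
  define g where "g = 1 / (8 * real Ln)"
  define J :: nat where "J = 8 * 2^N"
  have big: "32 < 1 / (8 * \<epsilon>)" using eps by (simp add: field_simps)
  have Ln1: "real Ln \<le> 1 / (8 * \<epsilon>)" "1 / (8 * \<epsilon>) - 1 < real Ln"
    unfolding Ln_def using big by linarith+
  have Lnge: "1 \<le> Ln" using Ln1 big by linarith
  have Lnpos: "0 < real Ln" using Lnge by simp
  have gpos: "0 < g" unfolding g_def using Lnpos by simp
  have gL: "g * real Ln = 1/8" unfolding g_def using Lnpos by simp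
  have g2: "2 * g < 1" unfolding g_def using Lnge by (simp add: field_simps)
  have geps: "\<epsilon> \<le> g"
  proof -
    have "8 * real Ln \<le> 1 / \<epsilon>" using Ln1(1) eps by (simp add: field_simps)
    then have "\<epsilon> * (8 * real Ln) \<le> 1" using eps by (simp add: field_simps)
    then show ?thesis unfolding g_def using Lnpos by (simp add: field_simps)
  qed
  define I where "I = {..<Ln} \<times> {..<J}"
  define F where "F p = ff g (real (fst p)) (real Ln) (real (snd p))" for p :: "nat \<times> nat"
  define E where "E p = {u \<in> space M. \<exists>i<N. \<bar>deriv (F p) (queries alg (F p) u N ! i)\<bar> < \<epsilon>}" for p
  have FF: "F p \<in> Fclass 1 1" if "p \<in> I" for p
    unfolding F_def using that unfolding I_def
    by (intro ff_in_F[OF gL _ gpos]) (auto simp: Lnge)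
  have mE: "measure M (E p) \<ge> 1/2" if "p \<in> I" for p
    using H FF[OF that] unfolding E_def by blast
  have sE: "E p \<in> sets M" if "p \<in> I" for p
    using mE[OF that] measure_notin_sets[of "E p" M] by force
  have finI: "finite I" unfolding I_def by simp
  have cardI: "card I = Ln * J" unfolding I_def by (simp add: card_cartesian_product)
  have intE: "integrable M (indicator (E p) :: 'u \<Rightarrow> real)" if "p \<in> I" for p
    using sE[OF that] by (intro integrable_real_indicator) (auto simp: less_top[symmetric])
  have "real (card I) * (1/2) = (\<Sum>p\<in>I. 1/2)" by simp
  also have "\<dots> \<le> (\<Sum>p\<in>I. measure M (E p))" by (rule sum_mono) (rule mE)
  also have "\<dots> = (\<Sum>p\<in>I. integral\<^sup>L M (indicator (E p)))"
  proof (rule sum.cong[OF refl])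
    fix p assume "p \<in> I"
    have "E p \<subseteq> space M" unfolding E_def by auto
    then show "measure M (E p) = integral\<^sup>L M (indicator (E p))"
      by (simp add: Int_absorb2)
  qed
  also have "\<dots> = integral\<^sup>L M (\<lambda>u. \<Sum>p\<in>I. indicator (E p) u)"
    using Bochner_Integration.integral_sum[where I=I and f="\<lambda>p. indicator (E p) :: 'u \<Rightarrow> real" and M=M] intE by simp
  also have "\<dots> \<le> integral\<^sup>L M (\<lambda>u. real (J * N + Ln * 2^N))"
  proof (rule integral_mono)
    show "integrable M (\<lambda>u. \<Sum>p\<in>I. indicator (E p) u :: real)" using intE by auto
    show "integrable M (\<lambda>u. real (J * N + Ln * 2^N))" by simp
    fix u assume u: "u \<in> space M"
    have "(\<Sum>p\<in>I. indicator (E p) u :: real) = (\<Sum>p\<in>I. if u \<in> E p then 1 else 0)"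
      by (intro sum.cong) (auto simp: indicator_def)
    also have "\<dots> = real (card {p\<in>I. u \<in> E p})"
      using sum.inter_filter[OF finI, of "\<lambda>_. 1::real" "\<lambda>p. u \<in> E p"] by simp
    also have "{p\<in>I. u \<in> E p} = {p\<in>{..<Ln} \<times> {..<J}. \<exists>i<N. \<bar>deriv (ff g (real (fst p)) (real Ln) (real (snd p)))
                (queries alg (ff g (real (fst p)) (real Ln) (real (snd p))) u N ! i)\<bar> < \<epsilon>}"
      unfolding I_def E_def F_def using u by auto
    also have "real (card \<dots>) \<le> real (J * N + Ln * 2^N)"
      using count_u[OF Lnge gpos g2 geps, of J N alg u] by linarith
    finally show "(\<Sum>p\<in>I. indicator (E p) u :: real) \<le> real (J * N + Ln * 2^N)" .
  qed
  also have "\<dots> = real (J * N + Ln * 2^N)" by (simp add: prob_space)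
  finally have ineq: "real (Ln * J) / 2 \<le> real J * real N + real Ln * 2^N"
    using cardI by simp
  have "real Ln * 2^N = real Ln * real J / 8" unfolding J_def by simp
  with ineq have "real J * (3 * real Ln / 8) \<le> real J * real N" by (simp add: algebra_simps)
  then have "3 * real Ln / 8 \<le> real N" using J_def by simp
  moreover have "1 / (16 * \<epsilon>) \<le> real Ln"
  proof -
    have "1 / (16 * \<epsilon>) = 1 / (8 * \<epsilon>) - 1 / (16 * \<epsilon>)" by (simp add: field_simps)
    moreover have "1 \<le> 1 / (16 * \<epsilon>)" using big by (simp add: field_simps)
    ultimately show ?thesis using Ln1 by linarith
  qed
  moreover have "1 / (256 * \<epsilon>) \<le> 3 / 8 * (1 / (16 * \<epsilon>))" using eps by (simp add: field_simps)
  ultimately show False using Nlt by linarith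
qed



lemma key2:
  fixes M :: "real measure"
  assumes eps: "0 < \<epsilon>" "\<epsilon> < 1/8" and P: "prob_space M"
    and H: "\<forall>f\<in>Fclass 1 1. measure M {u \<in> space M. \<exists>i<N. \<bar>deriv f (queries alg f u N ! i)\<bar> < \<epsilon>} \<ge> 1/2"
  shows "(1/256) / \<epsilon> \<le> real N"
proof (cases "\<epsilon> < 1/256")
  case True
  from key[OF eps(1) True P H] show ?thesis by simp
next
  case False
  have "N \<noteq> 0"
  proof
    assume N0: "N = 0"
    have "ff (1/8) 0 1 0 \<in> Fclass 1 1" by (rule ff_in_F) auto
    from H[rule_format, OF this] N0 show False by simp
  qed
  then have "1 \<le> real N" by simp
  moreover have "(1/256) / \<epsilon> \<le> 1" using False eps by (simp add: field_simps)
  ultimately show ?thesis by linarith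
qed

theorem theorem2p1:
  shows "\<exists>c>0. \<forall>\<epsilon>::real. 0 < \<epsilon> \<and> \<epsilon> < 1/8 \<longrightarrow>
           (\<forall>n::nat. C_rand \<epsilon> 1 1 \<le> enat n \<longrightarrow> c / \<epsilon> \<le> real n)"
proof (intro exI[of _ "1/256"] conjI allI impI)
  show "(0::real) < 1/256" by simp
  fix \<epsilon> :: real and n :: nat
  assume eps: "0 < \<epsilon> \<and> \<epsilon> < 1/8" and C: "C_rand \<epsilon> 1 1 \<le> enat n"
  define S where "S = {N. \<exists>(M :: real measure) alg.
      sets M = sets borel \<and> rand_alg M alg \<and>
      (\<forall>f\<in>Fclass 1 1.
         measure M {u \<in> space M. \<exists>i<N. \<bar>deriv f (queries alg f u N ! i)\<bar> < \<epsilon>} \<ge> 1/2)}"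
  have CS: "C_rand \<epsilon> 1 1 = Inf (enat ` S)" unfolding C_rand_def S_def by simp
  define k where "k = nat \<lceil>(1/256) / \<epsilon>\<rceil>"
  have kN: "k \<le> N" if "N \<in> S" for N
  proof -
    from that obtain M :: "real measure" and alg where
      "rand_alg M alg" and H: "\<forall>f\<in>Fclass 1 1.
         measure M {u \<in> space M. \<exists>i<N. \<bar>deriv f (queries alg f u N ! i)\<bar> < \<epsilon>} \<ge> 1/2"
      unfolding S_def by blast
    then have P: "prob_space M" unfolding rand_alg_def by blast
    have "(1/256) / \<epsilon> \<le> real N" using key2[OF _ _ P H] eps by blast
    then show ?thesis unfolding k_def by linarith
  qed
  have "enat k \<le> Inf (enat ` S)"
    by (rule Inf_greatest) (auto intro: kN)
  then have "enat k \<le> enat n" using C CS order_trans by metis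
  then have "k \<le> n" by simp
  then show "1/256 / \<epsilon> \<le> real n" unfolding k_def by linarith
qed

end
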